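(* Let $R$ be a commutative Noetherian ring of prime characteristic $p$ and let $H$ be a left $R[x,f]$-module admitting an HSL-number $m_0$, such that the $x$-torsion-free module $G:=H/\Gamma_x(H)$ has only finitely many $G$-special $R$-ideals. Let $\mathfrak{b}$ be the unique member of $\mathcal{I}(G)$ of height $\ge1$ that is contained in every member of $\mathcal{I}(G)$ of height $\ge1$. For $h\in H$ the following are equivalent: (i) $h$ is annihilated by $\bigoplus_{n\ge m_0}\mathfrak{b}^{[p^{m_0}]}x^n$; (ii) there exists $c\in R^\circ\cap\mathfrak{b}$ with $cx^nh=0$ for all $n\ge m_0$; (iii) there exists $c\in R^\circ\cap\mathfrak{b}$ with $cx^nh=0$ for all $n\gg0$; (iv) there exists $c\in R^\circ$ with $cx^nh=0$ for all $n\gg0$.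
   Context: $R[x,f]$ is the Frobenius skew polynomial ring: free left $R$-module on $(x^i)_{i\ge0}$, with $xr=r^px$. $\Gamma_x(H)=\{h\in H: x^jh=0\text{ for some }j\in\mathbb{N}\}$, an $R[x,f]$-submodule; $H/\Gamma_x(H)$ is $x$-torsion-free ($xg=0\Rightarrow g=0$). $H$ admits an HSL-number if there is $e\in\mathbb{N}_0$ with $x^e\Gamma_x(H)=0$; the smallest such $e$ is the HSL-number. The graded annihilator $\operatorname{grann}N$ is the set of $\sum r_ix^i$ with each $r_ix^i$ annihilating $N$. An ideal $\mathfrak{b}$ of $R$ is $G$-special if $\operatorname{grann}N=\bigoplus_{n\ge0}\mathfrak{b}x^n$ for some $R[x,f]$-submodule $N$ of $G$; $\mathcal{I}(G)$ is the set of these; $R$ has infinite height. $\mathfrak{b}^{[q]}$ is the ideal generated by $q$-th powers of elements of $\mathfrak{b}$; $R^\circ$ is the complement of the union of minimal primes. *)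

theory Defs
  imports Main "HOL-Library.Extended_Nat" "HOL-Computational_Algebra.Primes"
begin

definition is_ideal :: "'a::comm_ring_1 set \<Rightarrow> bool" where
  "is_ideal I \<longleftrightarrow> 0 \<in> I \<and> (\<forall>a\<in>I. \<forall>b\<in>I. a + b \<in> I) \<and> (\<forall>r. \<forall>a\<in>I. r * a \<in> I)"

definition ideal_gen :: "'a::comm_ring_1 set \<Rightarrow> 'a set" where
  "ideal_gen S = \<Inter> {I. is_ideal I \<and> S \<subseteq> I}"

definition noetherian_ring :: "'a::comm_ring_1 itself \<Rightarrow> bool" where
  "noetherian_ring _ \<longleftrightarrow> (\<forall>I::'a set. is_ideal I \<longrightarrow> (\<exists>S. finite S \<and> I = ideal_gen S))"

definition prime_ideal :: "'a::comm_ring_1 set \<Rightarrow> bool" where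
  "prime_ideal P \<longleftrightarrow> is_ideal P \<and> P \<noteq> UNIV \<and> (\<forall>a b. a * b \<in> P \<longrightarrow> a \<in> P \<or> b \<in> P)"

definition minimal_prime :: "'a::comm_ring_1 set \<Rightarrow> bool" where
  "minimal_prime P \<longleftrightarrow> prime_ideal P \<and> \<not> (\<exists>Q. prime_ideal Q \<and> Q \<subset> P)"

definition height_prime :: "'a::comm_ring_1 set \<Rightarrow> enat" where
  "height_prime P = Sup {enat n | n. \<exists>Q :: nat \<Rightarrow> 'a set.
      (\<forall>i\<le>n. prime_ideal (Q i)) \<and> (\<forall>i<n. Q i \<subset> Q (Suc i)) \<and> Q n = P}"

text \<open>Height of an ideal: infimum over primes containing it (so the whole ring has height infinity).\<close>
definition height :: "'a::comm_ring_1 set \<Rightarrow> enat" where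
  "height I = (INF P \<in> {P. prime_ideal P \<and> I \<subseteq> P}. height_prime P)"

definition frob_power :: "'a::comm_ring_1 set \<Rightarrow> nat \<Rightarrow> 'a set" where
  "frob_power b q = ideal_gen {r ^ q | r. r \<in> b}"

definition R_circ :: "'a::comm_ring_1 set" where
  "R_circ = {c. \<forall>P. minimal_prime P \<longrightarrow> c \<notin> P}"

text \<open>A left R[x,f]-module is an R-module H (scalar action sm) together with the
  additive map X (action of x) satisfying x r = r^p x, i.e. X (r h) = r^p X h.\<close>
definition frob_module :: "nat \<Rightarrow> ('a::comm_ring_1 \<Rightarrow> 'h::ab_group_add \<Rightarrow> 'h) \<Rightarrow> ('h \<Rightarrow> 'h) \<Rightarrow> bool" where
  "frob_module p sm X \<longleftrightarrow> module sm \<and> (\<forall>g h. X (g + h) = X g + X h)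
      \<and> (\<forall>r h. X (sm r h) = sm (r ^ p) (X h))"

definition frob_submodule :: "('a::comm_ring_1 \<Rightarrow> 'h::ab_group_add \<Rightarrow> 'h) \<Rightarrow> ('h \<Rightarrow> 'h) \<Rightarrow> 'h set \<Rightarrow> bool" where
  "frob_submodule sm X N \<longleftrightarrow> 0 \<in> N \<and> (\<forall>g\<in>N. \<forall>h\<in>N. g + h \<in> N)
      \<and> (\<forall>r. \<forall>h\<in>N. sm r h \<in> N) \<and> (\<forall>h\<in>N. X h \<in> N)"

definition Gamma_x :: "('h::ab_group_add \<Rightarrow> 'h) \<Rightarrow> 'h set" where
  "Gamma_x X = {h. \<exists>j. (X ^^ j) h = 0}"

definition hsl_number :: "('h::ab_group_add \<Rightarrow> 'h) \<Rightarrow> nat \<Rightarrow> bool" where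
  "hsl_number X e \<longleftrightarrow> (\<forall>h\<in>Gamma_x X. (X ^^ e) h = 0)
      \<and> (\<forall>e'<e. \<exists>h\<in>Gamma_x X. (X ^^ e') h \<noteq> 0)"

text \<open>R[x,f]-submodules of G are N'/Gamma_x(H)
  for R[x,f]-submodules N' of H containing Gamma_x(H); r x^n annihilates N'/Gamma_x(H)
  iff r x^n h lies in Gamma_x(H) for all h in N'. So grann(N) = direct sum of b x^n
  iff for every n the set of r with r x^n N = 0 is exactly b.\<close>
definition G_special :: "('a::comm_ring_1 \<Rightarrow> 'h::ab_group_add \<Rightarrow> 'h) \<Rightarrow> ('h \<Rightarrow> 'h) \<Rightarrow> 'a set \<Rightarrow> bool" where
  "G_special sm X b \<longleftrightarrow> (\<exists>N. frob_submodule sm X N \<and> Gamma_x X \<subseteq> N \<and>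
      (\<forall>n. {r. \<forall>h\<in>N. sm r ((X ^^ n) h) \<in> Gamma_x X} = b))"

definition I_G :: "('a::comm_ring_1 \<Rightarrow> 'h::ab_group_add \<Rightarrow> 'h) \<Rightarrow> ('h \<Rightarrow> 'h) \<Rightarrow> 'a set set" where
  "I_G sm X = {b. G_special sm X b}"

end

theory Submission
  imports Defs
begin


lemma ideal_gen_ideal: "is_ideal (ideal_gen S)"
  unfolding ideal_gen_def is_ideal_def by auto

lemma ideal_gen_sup: "S \<subseteq> ideal_gen S"
  unfolding ideal_gen_def by auto

lemma ideal_gen_least: "is_ideal I \<Longrightarrow> S \<subseteq> I \<Longrightarrow> ideal_gen S \<subseteq> I"
  unfolding ideal_gen_def by auto

lemma ideal_mult_right: "is_ideal I \<Longrightarrow> a \<in> I \<Longrightarrow> a * r \<in> I"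
  unfolding is_ideal_def by (metis mult.commute)

lemma ideal_mult_left: "is_ideal I \<Longrightarrow> a \<in> I \<Longrightarrow> r * a \<in> I"
  unfolding is_ideal_def by blast

lemma ideal_add: "is_ideal I \<Longrightarrow> a \<in> I \<Longrightarrow> b \<in> I \<Longrightarrow> a + b \<in> I"
  unfolding is_ideal_def by blast

lemma ideal_diff: "is_ideal I \<Longrightarrow> a \<in> I \<Longrightarrow> b \<in> I \<Longrightarrow> a - b \<in> I"
proof -
  assume "is_ideal I" "a \<in> I" "b \<in> I"
  then have "(-1) * b \<in> I" using ideal_mult_left[of I b "-1"] by blast
  then have "a + (-1) * b \<in> I" using \<open>is_ideal I\<close> \<open>a \<in> I\<close> ideal_add by blast
  then show ?thesis by simp
qed

lemma ideal_one: "is_ideal I \<Longrightarrow> 1 \<in> I \<Longrightarrow> I = UNIV"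
  using ideal_mult_left[of I 1] by auto

lemma noeth_no_chain:
  assumes noeth: "noetherian_ring TYPE('a::comm_ring_1)"
  shows "\<not> (\<exists>f::nat \<Rightarrow> 'a set. \<forall>n. is_ideal (f n) \<and> f n \<subset> f (Suc n))"
proof
  assume "\<exists>f::nat \<Rightarrow> 'a set. \<forall>n. is_ideal (f n) \<and> f n \<subset> f (Suc n)"
  then obtain f :: "nat \<Rightarrow> 'a set" where f: "\<And>n. is_ideal (f n)" "\<And>n. f n \<subset> f (Suc n)" by blast
  have mono: "m \<le> n \<Longrightarrow> f m \<subseteq> f n" for m n
    by (rule lift_Suc_mono_le[of f]) (use f(2) in auto)
  define U where "U = \<Union> (range f)"
  have "is_ideal U"
    unfolding is_ideal_def
  proof (intro conjI ballI allI)
    show "0 \<in> U" using f(1)[of 0] unfolding U_def is_ideal_def by auto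
  next
    fix a b assume "a \<in> U" "b \<in> U"
    then obtain i j where "a \<in> f i" "b \<in> f j" unfolding U_def by auto
    then have "a \<in> f (max i j)" "b \<in> f (max i j)" using mono[OF max.cobounded1, of i j] mono[OF max.cobounded2, of j i] by auto
    then show "a + b \<in> U" using f(1) ideal_add unfolding U_def by blast
  next
    fix r a assume "a \<in> U"
    then obtain i where "a \<in> f i" unfolding U_def by auto
    then show "r * a \<in> U" using f(1) ideal_mult_left unfolding U_def by blast
  qed
  then obtain S where S: "finite S" "U = ideal_gen S"
    using noeth unfolding noetherian_ring_def by blast
  have "\<forall>s\<in>S. \<exists>i. s \<in> f i" using ideal_gen_sup[of S] S(2) unfolding U_def by auto
  define k where "k s = (SOME i. s \<in> f i)" for s
  have k: "s \<in> f (k s)" if "s \<in> S" for s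
    unfolding k_def using \<open>\<forall>s\<in>S. \<exists>i. s \<in> f i\<close> that by (metis someI_ex)
  define K where "K = Max (k ` S)"
  have "S \<subseteq> f K"
  proof
    fix s assume "s \<in> S"
    then have "k s \<le> K" unfolding K_def using S(1) by auto
    then show "s \<in> f K" using k[OF \<open>s \<in> S\<close>] mono by blast
  qed
  then have "U \<subseteq> f K" using S(2) ideal_gen_least[OF f(1)] by simp
  moreover have "f (Suc K) \<subseteq> U" unfolding U_def by auto
  ultimately show False using f(2)[of K] by auto
qed

definition ideal_rel :: "('a::comm_ring_1 set \<times> 'a set) set" where
  "ideal_rel = {(J, I). is_ideal I \<and> is_ideal J \<and> I \<subset> J}"

lemma wf_ideal_rel:
  assumes noeth: "noetherian_ring TYPE('a::comm_ring_1)"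
  shows "wf (ideal_rel :: ('a set \<times> 'a set) set)"
  unfolding wf_iff_no_infinite_down_chain
proof
  assume "\<exists>f. \<forall>i. (f (Suc i), f i) \<in> (ideal_rel :: ('a set \<times> 'a set) set)"
  then obtain f :: "nat \<Rightarrow> 'a set" where "\<forall>i. (f (Suc i), f i) \<in> ideal_rel" by blast
  then have "\<forall>n. is_ideal (f n) \<and> f n \<subset> f (Suc n)" unfolding ideal_rel_def by auto
  then show False using noeth_no_chain[OF noeth] by blast
qed

lemma prime_cover:
  assumes noeth: "noetherian_ring TYPE('a::comm_ring_1)"
  shows "is_ideal (I::'a set) \<Longrightarrow> \<exists>F. finite F \<and> (\<forall>P\<in>F. prime_ideal P \<and> I \<subseteq> P)
     \<and> (\<forall>P. prime_ideal P \<and> I \<subseteq> P \<longrightarrow> (\<exists>Q\<in>F. Q \<subseteq> P))"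
proof (induction I rule: wf_induct[OF wf_ideal_rel[OF noeth]])
  case (1 I)
  show ?case
  proof (cases "I = UNIV")
    case True
    have "\<forall>P. prime_ideal P \<and> I \<subseteq> P \<longrightarrow> (\<exists>Q\<in>{}. Q \<subseteq> P)"
      using True unfolding prime_ideal_def by (auto simp: top_le)
    then show ?thesis by (intro exI[of _ "{}"]) simp
  next
    case nU: False
    show ?thesis
    proof (cases "prime_ideal I")
      case True
      then show ?thesis by (intro exI[of _ "{I}"]) simp
    next
      case False
      have "\<not> (\<forall>a b. a * b \<in> I \<longrightarrow> a \<in> I \<or> b \<in> I)"
        using False nU 1(2) by (simp add: prime_ideal_def)
      then obtain a b where ab: "a * b \<in> I" "a \<notin> I" "b \<notin> I" by blast
      define Ja where "Ja = ideal_gen (insert a I)"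
      define Jb where "Jb = ideal_gen (insert b I)"
      have Ja1: "insert a I \<subseteq> Ja" unfolding Ja_def by (rule ideal_gen_sup)
      have Ja: "is_ideal Ja" "I \<subset> Ja"
        using ideal_gen_ideal Ja1 ab(2) unfolding Ja_def by blast+
      have Jb1: "insert b I \<subseteq> Jb" unfolding Jb_def by (rule ideal_gen_sup)
      have Jb: "is_ideal Jb" "I \<subset> Jb"
        using ideal_gen_ideal Jb1 ab(3) unfolding Jb_def by blast+
      have ra: "(Ja, I) \<in> ideal_rel" using Ja 1(2) unfolding ideal_rel_def by simp
      have rb: "(Jb, I) \<in> ideal_rel" using Jb 1(2) unfolding ideal_rel_def by simp
      obtain Fa where Fa: "finite Fa" "\<forall>P\<in>Fa. prime_ideal P \<and> Ja \<subseteq> P"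
        "\<forall>P. prime_ideal P \<and> Ja \<subseteq> P \<longrightarrow> (\<exists>Q\<in>Fa. Q \<subseteq> P)"
        using 1(1)[rule_format, OF ra Ja(1)] by blast
      obtain Fb where Fb: "finite Fb" "\<forall>P\<in>Fb. prime_ideal P \<and> Jb \<subseteq> P"
        "\<forall>P. prime_ideal P \<and> Jb \<subseteq> P \<longrightarrow> (\<exists>Q\<in>Fb. Q \<subseteq> P)"
        using 1(1)[rule_format, OF rb Jb(1)] by blast
      show ?thesis
      proof (rule exI[of _ "Fa \<union> Fb"], intro conjI)
        show "finite (Fa \<union> Fb)" using Fa Fb by auto
      next
        have "I \<subseteq> Ja" "I \<subseteq> Jb" using Ja(2) Jb(2) by auto
        then show "\<forall>P\<in>Fa \<union> Fb. prime_ideal P \<and> I \<subseteq> P" using Fa(2) Fb(2) by blast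
      next
        show "\<forall>P. prime_ideal P \<and> I \<subseteq> P \<longrightarrow> (\<exists>Q\<in>Fa \<union> Fb. Q \<subseteq> P)"
        proof (intro allI impI)
        fix P assume P: "prime_ideal P \<and> I \<subseteq> P"
        have m: "\<And>x y. x * y \<in> P \<Longrightarrow> x \<in> P \<or> y \<in> P" using P unfolding prime_ideal_def by blast
        have "a * b \<in> P" using ab(1) P by blast
        then have "a \<in> P \<or> b \<in> P" by (rule m)
        then show "\<exists>Q\<in>Fa \<union> Fb. Q \<subseteq> P"
        proof
          assume "a \<in> P"
          then have "insert a I \<subseteq> P" using P by blast
          moreover have "is_ideal P" using P unfolding prime_ideal_def by blast
          ultimately have "Ja \<subseteq> P" unfolding Ja_def using ideal_gen_least by blast
          then obtain Q where "Q \<in> Fa" "Q \<subseteq> P" using Fa(3) P by blast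
          then show ?thesis by blast
        next
          assume "b \<in> P"
          then have "insert b I \<subseteq> P" using P by blast
          moreover have "is_ideal P" using P unfolding prime_ideal_def by blast
          ultimately have "Jb \<subseteq> P" unfolding Jb_def using ideal_gen_least by blast
          then obtain Q where "Q \<in> Fb" "Q \<subseteq> P" using Fb(3) P by blast
          then show ?thesis by blast
        qed
        qed
      qed
    qed
  qed
qed

lemma finite_minimal_primes:
  assumes noeth: "noetherian_ring TYPE('a::comm_ring_1)"
  shows "finite {P::'a set. minimal_prime P}"
proof -
  have z: "is_ideal ({0}::'a set)" unfolding is_ideal_def by auto
  obtain F where F: "finite F" "\<forall>P\<in>F. prime_ideal P \<and> {0::'a} \<subseteq> P"
     "\<forall>P. prime_ideal P \<and> {0::'a} \<subseteq> P \<longrightarrow> (\<exists>Q\<in>F. Q \<subseteq> P)"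
    using prime_cover[OF noeth z] by blast
  have "{P::'a set. minimal_prime P} \<subseteq> F"
  proof
    fix P assume "P \<in> {P::'a set. minimal_prime P}"
    then have P: "minimal_prime P" by simp
    then have pP: "prime_ideal P" unfolding minimal_prime_def by blast
    then have "0 \<in> P" unfolding prime_ideal_def is_ideal_def by blast
    then have "{0} \<subseteq> P" by simp
    then obtain Q where Q: "Q \<in> F" "Q \<subseteq> P" using F(3) pP by blast
    have "prime_ideal Q" using F(2) Q(1) by blast
    then have "Q = P" using P Q(2) unfolding minimal_prime_def by blast
    then show "P \<in> F" using Q(1) by simp
  qed
  then show ?thesis using F(1) finite_subset by blast
qed

lemma prime_prod_notin:
  assumes "prime_ideal Q" "finite A"
  shows "(\<forall>a\<in>A. f a \<notin> Q) \<Longrightarrow> prod f A \<notin> Q"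
  using assms(2)
proof (induction A rule: finite_induct)
  case empty
  have "1 \<notin> Q" using assms(1) ideal_one unfolding prime_ideal_def by blast
  then show ?case by simp
next
  case (insert x F)
  have m: "\<And>a b. a * b \<in> Q \<Longrightarrow> a \<in> Q \<or> b \<in> Q" using assms(1) unfolding prime_ideal_def by blast
  have "f x \<notin> Q" "prod f F \<notin> Q" using insert by auto
  then have "f x * prod f F \<notin> Q" using m by blast
  then show ?case using insert(1,2) by simp
qed

lemma prime_avoid:
  "finite F \<Longrightarrow> \<forall>P\<in>F. prime_ideal P \<Longrightarrow> is_ideal I \<Longrightarrow> \<forall>P\<in>F. \<not> I \<subseteq> P
   \<Longrightarrow> \<exists>x\<in>I. \<forall>P\<in>F. x \<notin> (P::'a::comm_ring_1 set)"
proof (induction "card F" arbitrary: F rule: less_induct)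
  case less
  show ?case
  proof (cases "card F \<le> 1")
    case True
    have "F = {} \<or> (\<exists>Q. F = {Q})"
    proof (cases "F = {}")
      case False
      then obtain Q where Q: "Q \<in> F" by blast
      have "card (F - {Q}) = 0" using True Q less(2) by simp
      then have "F - {Q} = {}" using less(2) by simp
      then show ?thesis using Q by blast
    qed simp
    then show ?thesis
    proof
      assume "F = {}" then show ?thesis using less(4) unfolding is_ideal_def by auto
    next
      assume "\<exists>Q. F = {Q}"
      then show ?thesis using less(5) by auto
    qed
  next
    case False
    have "\<forall>P\<in>F. \<exists>x\<in>I. \<forall>P'\<in>F-{P}. x \<notin> P'"
    proof
      fix P assume "P \<in> F"
      then have "card (F - {P}) < card F" using less(2) by (meson card_Diff1_less)
      then show "\<exists>x\<in>I. \<forall>P'\<in>F-{P}. x \<notin> P'" using less by auto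
    qed
    then obtain xf where xf: "\<And>P. P \<in> F \<Longrightarrow> xf P \<in> I" "\<And>P P'. P \<in> F \<Longrightarrow> P' \<in> F - {P} \<Longrightarrow> xf P \<notin> P'"
      by metis
    show ?thesis
    proof (cases "\<exists>P\<in>F. xf P \<notin> P")
      case True
      then obtain P where "P \<in> F" "xf P \<notin> P" by blast
      then show ?thesis using xf by (intro bexI[of _ "xf P"]) auto
    next
      case False
      then have inP: "\<And>P. P \<in> F \<Longrightarrow> xf P \<in> P" by blast
      have "F \<noteq> {}" using \<open>\<not> card F \<le> 1\<close> by auto
      then obtain Q where Q: "Q \<in> F" by blast
      define y where "y = xf Q + prod xf (F - {Q})"
      have fin: "finite (F - {Q})" using less(2) by auto
      have ne: "F - {Q} \<noteq> {}"
      proof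
        assume "F - {Q} = {}"
        then have "F = {Q}" using Q by blast
        then show False using \<open>\<not> card F \<le> 1\<close> by simp
      qed
      have prodP: "prod xf (F - {Q}) \<in> P" if "P \<in> F - {Q}" for P
      proof -
        have "prod xf (F - {Q}) = xf P * prod xf (F - {Q} - {P})"
          using prod.remove[OF fin that] by simp
        then show ?thesis using ideal_mult_right inP that less(3) unfolding prime_ideal_def
          by (metis DiffD1)
      qed
      have prodI: "prod xf (F - {Q}) \<in> I"
      proof -
        obtain P where P: "P \<in> F - {Q}" using ne by blast
        have "prod xf (F - {Q}) = xf P * prod xf (F - {Q} - {P})"
          using prod.remove[OF fin P] by simp
        then show ?thesis using ideal_mult_right xf(1) P less(4) by (metis DiffD1)
      qed
      have prodQ: "prod xf (F - {Q}) \<notin> Q"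
        using prime_prod_notin[of Q "F - {Q}" xf] less(3) Q fin xf(2) by auto
      show ?thesis
      proof (intro bexI[of _ y] ballI)
        show "y \<in> I" unfolding y_def using xf(1)[OF Q] prodI less(4) ideal_add by blast
      next
        fix P assume P: "P \<in> F"
        have idP: "is_ideal P" using less(3) P unfolding prime_ideal_def by blast
        show "y \<notin> P"
        proof
          assume yP: "y \<in> P"
          show False
          proof (cases "P = Q")
            case True
            then have "y - xf Q \<in> P" using yP inP[OF Q] ideal_diff idP by blast
            then show False using prodQ True unfolding y_def by simp
          next
            case False
            then have PF: "P \<in> F - {Q}" using P by simp
            then have "y - prod xf (F - {Q}) \<in> P" using yP prodP ideal_diff idP by blast
            then show False using xf(2)[OF Q PF] unfolding y_def by simp
          qed
        qed
      qed
    qed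
  qed
qed

lemma height_minimal_zero:
  assumes "minimal_prime P" shows "height_prime P = 0"
proof -
  have "{enat n | n. \<exists>Q :: nat \<Rightarrow> 'a set.
      (\<forall>i\<le>n. prime_ideal (Q i)) \<and> (\<forall>i<n. Q i \<subset> Q (Suc i)) \<and> Q n = P} \<subseteq> {0}"
  proof
    fix e assume "e \<in> {enat n | n. \<exists>Q :: nat \<Rightarrow> 'a set.
      (\<forall>i\<le>n. prime_ideal (Q i)) \<and> (\<forall>i<n. Q i \<subset> Q (Suc i)) \<and> Q n = P}"
    then obtain n Q where e: "e = enat n" "\<forall>i\<le>n. prime_ideal (Q i)" "\<forall>i<n. Q i \<subset> Q (Suc i)" "Q n = P"
      by blast
    have "n = 0"
    proof (rule ccontr)
      assume "n \<noteq> 0"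
      then obtain m where m: "n = Suc m" using not0_implies_Suc by blast
      then have "prime_ideal (Q m)" "Q m \<subset> P" using e by auto
      then show False using assms unfolding minimal_prime_def by blast
    qed
    then show "e \<in> {0}" using e by (simp add: zero_enat_def)
  qed
  then have "height_prime P \<le> 0" unfolding height_prime_def
    by (intro Sup_least) auto
  then show ?thesis by simp
qed

lemma height_nonminimal:
  assumes "prime_ideal P" "\<not> minimal_prime P" shows "height_prime P \<ge> 1"
proof -
  obtain Q where Q: "prime_ideal Q" "Q \<subset> P" using assms unfolding minimal_prime_def by blast
  define C where "C = (\<lambda>i::nat. if i = 0 then Q else P)"
  have c1: "\<forall>i\<le>1. prime_ideal (C i)"
  proof (intro allI impI)
    fix i :: nat assume "i \<le> 1"
    then show "prime_ideal (C i)" using Q(1) assms(1) unfolding C_def by simp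
  qed
  have c2: "\<forall>i<1. C i \<subset> C (Suc i)" using Q(2) unfolding C_def by simp
  have c3: "C 1 = P" unfolding C_def by simp
  have "enat 1 \<in> {enat n | n. \<exists>Q :: nat \<Rightarrow> 'a set.
      (\<forall>i\<le>n. prime_ideal (Q i)) \<and> (\<forall>i<n. Q i \<subset> Q (Suc i)) \<and> Q n = P}"
    using c1 c2 c3 by blast
  then have "enat 1 \<le> height_prime P" unfolding height_prime_def by (rule Sup_upper)
  then show ?thesis by (simp add: one_enat_def)
qed

lemma height_ge1_meets_Rcirc:
  assumes noeth: "noetherian_ring TYPE('a::comm_ring_1)"
    and b: "is_ideal (b::'a set)" "height b \<ge> 1"
  shows "\<exists>c\<in>b. c \<in> R_circ"
proof -
  have "\<forall>P\<in>{P. minimal_prime P}. \<not> b \<subseteq> P"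
  proof (intro ballI notI)
    fix P assume "P \<in> {P. minimal_prime P}" "b \<subseteq> P"
    then have "height b \<le> height_prime P" unfolding height_def
      by (intro INF_lower) (auto simp: minimal_prime_def)
    moreover have "height_prime P = 0" using height_minimal_zero \<open>P \<in> _\<close> by blast
    ultimately have "height b \<le> 0" by simp
    then show False using b(2) by simp
  qed
  then obtain x where "x \<in> b" "\<forall>P\<in>{P. minimal_prime P}. x \<notin> P"
    using prime_avoid[OF finite_minimal_primes[OF noeth] _ b(1)] unfolding minimal_prime_def by auto
  then show ?thesis unfolding R_circ_def by auto
qed



context
  fixes sm :: "'a::comm_ring_1 \<Rightarrow> 'h::ab_group_add \<Rightarrow> 'h" and X :: "'h \<Rightarrow> 'h" and p :: nat
  assumes fm: "frob_module p sm X"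
begin

lemma fm_module: "module sm" using fm unfolding frob_module_def by blast

lemma X_add: "X (g + h) = X g + X h" using fm unfolding frob_module_def by blast

lemma X_sm: "X (sm r h) = sm (r ^ p) (X h)" using fm unfolding frob_module_def by blast

lemma X_zero: "X 0 = 0"
  using X_add[of 0 0] by simp

lemma sm_zero: "sm r 0 = 0" using module.scale_zero_right[OF fm_module] .
lemma sm_zero_left: "sm 0 h = 0" using module.scale_zero_left[OF fm_module] .
lemma sm_add: "sm r (g + h) = sm r g + sm r h" using module.scale_right_distrib[OF fm_module] .
lemma sm_add_left: "sm (r + s) h = sm r h + sm s h" using module.scale_left_distrib[OF fm_module] .
lemma sm_sm: "sm r (sm s h) = sm (r * s) h" using module.scale_scale[OF fm_module] .

lemma Xp_zero: "(X ^^ n) 0 = 0"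
  by (induction n) (auto simp: X_zero)

lemma Xp_add: "(X ^^ n) (g + h) = (X ^^ n) g + (X ^^ n) h"
  by (induction n) (auto simp: X_add)

lemma Xp_sm: "(X ^^ n) (sm r h) = sm (r ^ (p ^ n)) ((X ^^ n) h)"
proof (induction n)
  case 0 then show ?case by simp
next
  case (Suc n)
  have "(X ^^ Suc n) (sm r h) = X (sm (r ^ (p ^ n)) ((X ^^ n) h))" using Suc by simp
  also have "\<dots> = sm ((r ^ (p ^ n)) ^ p) (X ((X ^^ n) h))" by (rule X_sm)
  also have "(r ^ (p ^ n)) ^ p = r ^ (p ^ Suc n)" by (simp add: power_mult[symmetric] mult.commute)
  finally show ?case by simp
qed

lemma Gamma_zero: "0 \<in> Gamma_x X"
  unfolding Gamma_x_def by (auto intro: exI[of _ 0])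

lemma Gamma_add: "g \<in> Gamma_x X \<Longrightarrow> h \<in> Gamma_x X \<Longrightarrow> g + h \<in> Gamma_x X"
proof -
  assume "g \<in> Gamma_x X" "h \<in> Gamma_x X"
  then obtain i j where ij: "(X ^^ i) g = 0" "(X ^^ j) h = 0" unfolding Gamma_x_def by blast
  have "(X ^^ (j + i)) g = 0" using ij(1) by (simp add: funpow_add Xp_zero)
  moreover have "(X ^^ (i + j)) h = 0" using ij(2) by (simp add: funpow_add Xp_zero)
  ultimately have "(X ^^ (i + j)) (g + h) = 0" by (simp add: Xp_add add.commute)
  then show ?thesis unfolding Gamma_x_def by blast
qed

lemma Gamma_sm: "h \<in> Gamma_x X \<Longrightarrow> sm r h \<in> Gamma_x X"
proof -
  assume "h \<in> Gamma_x X"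
  then obtain j where "(X ^^ j) h = 0" unfolding Gamma_x_def by blast
  then have "(X ^^ j) (sm r h) = 0" by (simp add: Xp_sm sm_zero)
  then show ?thesis unfolding Gamma_x_def by blast
qed

lemma Gamma_Xp: "h \<in> Gamma_x X \<Longrightarrow> (X ^^ n) h \<in> Gamma_x X"
proof -
  assume "h \<in> Gamma_x X"
  then obtain j where "(X ^^ j) h = 0" unfolding Gamma_x_def by blast
  then have "(X ^^ j) ((X ^^ n) h) = 0"
    by (metis Xp_zero add.commute funpow_add o_apply)
  then show ?thesis unfolding Gamma_x_def by blast
qed

lemma Gamma_pull: "(X ^^ n) h \<in> Gamma_x X \<Longrightarrow> h \<in> Gamma_x X"
proof -
  assume "(X ^^ n) h \<in> Gamma_x X"
  then obtain j where "(X ^^ j) ((X ^^ n) h) = 0" unfolding Gamma_x_def by blast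
  then have "(X ^^ (j + n)) h = 0" by (simp add: funpow_add)
  then show ?thesis unfolding Gamma_x_def by blast
qed

lemma ann_ideal: "is_ideal {r. sm r v = 0}"
  unfolding is_ideal_def by (auto simp: sm_zero_left sm_add_left sm_sm[symmetric] sm_zero)

end



lemma prime_pow_mem: "prime_ideal P \<Longrightarrow> c ^ k \<in> P \<Longrightarrow> c \<in> P"
proof (induction k)
  case 0
  then show ?case using ideal_one unfolding prime_ideal_def by auto
next
  case (Suc k)
  then have "c \<in> P \<or> c ^ k \<in> P" unfolding prime_ideal_def by simp
  then show ?case using Suc by blast
qed

lemma Rcirc_pow: "c \<in> R_circ \<Longrightarrow> c ^ k \<in> R_circ"
  unfolding R_circ_def minimal_prime_def using prime_pow_mem by blast

lemma ideal_pow_mem: "is_ideal I \<Longrightarrow> c \<in> I \<Longrightarrow> k \<ge> 1 \<Longrightarrow> c ^ k \<in> I"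
proof -
  assume "is_ideal I" "c \<in> I" "k \<ge> 1"
  then obtain j where "k = Suc j" using not0_implies_Suc by fastforce
  then have "c ^ k = c ^ j * c" by (simp add: mult.commute)
  then show ?thesis using \<open>is_ideal I\<close> \<open>c \<in> I\<close> ideal_mult_left by metis
qed

context
  fixes sm :: "'a::comm_ring_1 \<Rightarrow> 'h::ab_group_add \<Rightarrow> 'h" and X :: "'h \<Rightarrow> 'h" and p :: nat
  assumes fm: "frob_module p sm X"
begin

lemma annG_ideal: "is_ideal {r. \<forall>g\<in>N. sm r ((X ^^ n) g) \<in> Gamma_x X}"
  unfolding is_ideal_def
  using Gamma_zero[OF fm] Gamma_add[OF fm] Gamma_sm[OF fm]
  by (auto simp: sm_zero_left[OF fm] sm_add_left[OF fm] sm_sm[OF fm, symmetric])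

end


theorem corollary3p16:
  fixes sm :: "'a::comm_ring_1 \<Rightarrow> 'h::ab_group_add \<Rightarrow> 'h"
    and X :: "'h \<Rightarrow> 'h" and p m0 :: nat and b :: "'a set" and h :: 'h
  assumes noeth: "noetherian_ring TYPE('a)"
    and charp: "prime p" "CHAR('a) = p"
    and modH: "frob_module p sm X"
    and hsl: "hsl_number X m0"
    and fin: "finite (I_G sm X)"
    and b_mem: "b \<in> I_G sm X" and b_ht: "height b \<ge> 1"
    and b_least: "\<forall>a \<in> I_G sm X. height a \<ge> 1 \<longrightarrow> b \<subseteq> a"
  shows "((\<forall>n\<ge>m0. \<forall>r\<in>frob_power b (p ^ m0). sm r ((X ^^ n) h) = 0)
          \<longleftrightarrow> (\<exists>c\<in>R_circ \<inter> b. \<forall>n\<ge>m0. sm c ((X ^^ n) h) = 0))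
       \<and> ((\<exists>c\<in>R_circ \<inter> b. \<forall>n\<ge>m0. sm c ((X ^^ n) h) = 0)
          \<longleftrightarrow> (\<exists>c\<in>R_circ \<inter> b. \<exists>N. \<forall>n\<ge>N. sm c ((X ^^ n) h) = 0))
       \<and> ((\<exists>c\<in>R_circ \<inter> b. \<exists>N. \<forall>n\<ge>N. sm c ((X ^^ n) h) = 0)
          \<longleftrightarrow> (\<exists>c\<in>R_circ. \<exists>N. \<forall>n\<ge>N. sm c ((X ^^ n) h) = 0))"
proof -
  let ?G = "Gamma_x X"
  let ?q = "p ^ m0"
  let ?i1 = "\<forall>n\<ge>m0. \<forall>r\<in>frob_power b ?q. sm r ((X ^^ n) h) = 0"
  let ?i2 = "\<exists>c\<in>R_circ \<inter> b. \<forall>n\<ge>m0. sm c ((X ^^ n) h) = 0"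
  let ?i3 = "\<exists>c\<in>R_circ \<inter> b. \<exists>N. \<forall>n\<ge>N. sm c ((X ^^ n) h) = 0"
  let ?i4 = "\<exists>c\<in>R_circ. \<exists>N. \<forall>n\<ge>N. sm c ((X ^^ n) h) = 0"
  have p1: "p \<ge> 1" using charp(1) prime_gt_0_nat by (simp add: Suc_leI)
  have q1: "?q \<ge> 1" using p1 by simp
  have hslG: "\<And>g. g \<in> ?G \<Longrightarrow> (X ^^ m0) g = 0" using hsl unfolding hsl_number_def by blast
  obtain Nb where Nb: "frob_submodule sm X Nb" "?G \<subseteq> Nb"
      "\<forall>n. {r. \<forall>g\<in>Nb. sm r ((X ^^ n) g) \<in> ?G} = b"
    using b_mem unfolding I_G_def G_special_def by blast
  have e0: "{r. \<forall>g\<in>Nb. sm r ((X ^^ 0) g) \<in> ?G} = b" using Nb(3) by blast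
  have b_ideal: "is_ideal b" using annG_ideal[OF modH, of Nb 0, unfolded e0] .
  have i12: "?i1 \<Longrightarrow> ?i2"
  proof -
    assume i1: ?i1
    obtain c where c: "c \<in> b" "c \<in> R_circ" using height_ge1_meets_Rcirc[OF noeth b_ideal b_ht] by blast
    have "c ^ ?q \<in> {s ^ ?q | s. s \<in> b}" using c(1) by blast
    then have "c ^ ?q \<in> frob_power b ?q" unfolding frob_power_def using ideal_gen_sup by (rule subsetD[rotated])
    moreover have "c ^ ?q \<in> b" using ideal_pow_mem[OF b_ideal c(1) q1] .
    moreover have "c ^ ?q \<in> R_circ" using Rcirc_pow[OF c(2)] .
    ultimately show ?i2 using i1 by blast
  qed
  have i23: "?i2 \<Longrightarrow> ?i3" by blast
  have i34: "?i3 \<Longrightarrow> ?i4" by blast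
  have i41: "?i4 \<Longrightarrow> ?i1"
  proof -
    assume ?i4
    then obtain c N0 where c: "c \<in> R_circ" "\<And>n. n \<ge> N0 \<Longrightarrow> sm c ((X ^^ n) h) = 0" by blast
    define Np where "Np = {g. \<forall>n. sm c ((X ^^ n) g) \<in> ?G}"
    have sub: "frob_submodule sm X Np"
      unfolding frob_submodule_def
    proof (intro conjI ballI allI)
      show "0 \<in> Np" unfolding Np_def by (simp add: Xp_zero[OF modH] sm_zero[OF modH] Gamma_zero[OF modH])
    next
      fix g g' assume "g \<in> Np" "g' \<in> Np"
      then show "g + g' \<in> Np" unfolding Np_def
        by (simp add: Xp_add[OF modH] sm_add[OF modH] Gamma_add[OF modH])
    next
      fix r g assume g: "g \<in> Np"
      show "sm r g \<in> Np" unfolding Np_def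
      proof (intro CollectI allI)
        fix n
        have "sm c ((X ^^ n) (sm r g)) = sm (r ^ (p ^ n)) (sm c ((X ^^ n) g))"
          by (simp add: Xp_sm[OF modH] sm_sm[OF modH] mult.commute)
        then show "sm c ((X ^^ n) (sm r g)) \<in> ?G"
          using g Gamma_sm[OF modH] unfolding Np_def by simp
      qed
    next
      fix g assume g: "g \<in> Np"
      show "X g \<in> Np" unfolding Np_def
      proof (intro CollectI allI)
        fix n
        have e: "(X ^^ n) (X g) = (X ^^ Suc n) g" by (simp only: funpow_Suc_right o_apply)
        have "sm c ((X ^^ Suc n) g) \<in> ?G" using g unfolding Np_def by blast
        then show "sm c ((X ^^ n) (X g)) \<in> ?G" by (simp only: e)
      qed
    qed
    have GN: "?G \<subseteq> Np"
    proof
      fix g assume "g \<in> ?G"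
      then show "g \<in> Np" unfolding Np_def using Gamma_Xp[OF modH] Gamma_sm[OF modH] by blast
    qed
    define A where "A n = {r. \<forall>g\<in>Np. sm r ((X ^^ n) g) \<in> ?G}" for n
    have Asuc: "A (Suc n) = A n" for n
    proof
      show "A n \<subseteq> A (Suc n)"
      proof
        fix r assume r: "r \<in> A n"
        show "r \<in> A (Suc n)" unfolding A_def
        proof (intro CollectI ballI)
          fix g assume "g \<in> Np"
          then have "X g \<in> Np" using sub unfolding frob_submodule_def by blast
          then have "sm r ((X ^^ n) (X g)) \<in> ?G" using r unfolding A_def by blast
          moreover have "(X ^^ n) (X g) = (X ^^ Suc n) g" by (simp only: funpow_Suc_right o_apply)
          ultimately show "sm r ((X ^^ Suc n) g) \<in> ?G" by simp
        qed
      qed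
    next
      show "A (Suc n) \<subseteq> A n"
      proof
        fix r assume r: "r \<in> A (Suc n)"
        show "r \<in> A n" unfolding A_def
        proof (intro CollectI ballI)
          fix g assume "g \<in> Np"
          then have "sm r ((X ^^ Suc n) g) \<in> ?G" using r unfolding A_def by blast
          then have "sm (r ^ (p - 1)) (sm r ((X ^^ Suc n) g)) \<in> ?G" by (rule Gamma_sm[OF modH])
          moreover have "r ^ (p - 1) * r = r ^ p" using p1
            by (metis One_nat_def Suc_diff_le diff_Suc_1 power_Suc2)
          ultimately have "sm (r ^ p) ((X ^^ Suc n) g) \<in> ?G" by (simp add: sm_sm[OF modH])
          moreover have "X (sm r ((X ^^ n) g)) = sm (r ^ p) ((X ^^ Suc n) g)"
            by (simp add: X_sm[OF modH])
          ultimately have "(X ^^ 1) (sm r ((X ^^ n) g)) \<in> ?G" by simp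
          then show "sm r ((X ^^ n) g) \<in> ?G" by (rule Gamma_pull[OF modH])
        qed
      qed
    qed
    have Aall: "A n = A 0" for n
      by (induction n) (simp_all add: Asuc)
    have AIG: "A 0 \<in> I_G sm X"
      unfolding I_G_def G_special_def
      using sub GN Aall unfolding A_def by blast
    have cA: "c \<in> A 0" unfolding A_def Np_def
    proof (intro CollectI ballI)
      fix g assume "g \<in> {g. \<forall>n. sm c ((X ^^ n) g) \<in> ?G}"
      then have "sm c ((X ^^ 0) g) \<in> ?G" by blast
      then show "sm c ((X ^^ 0) g) \<in> ?G" .
    qed
    have Aht: "height (A 0) \<ge> 1"
      unfolding height_def
    proof (rule INF_greatest)
      fix P assume P: "P \<in> {P. prime_ideal P \<and> A 0 \<subseteq> P}"
      then have "c \<in> P" using cA by blast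
      then have "\<not> minimal_prime P" using c(1) unfolding R_circ_def by blast
      then show "1 \<le> height_prime P" using height_nonminimal P by blast
    qed
    have bA: "b \<subseteq> A 0" using b_least AIG Aht by blast
    have hN: "(X ^^ N0) h \<in> Np" unfolding Np_def
    proof (intro CollectI allI)
      fix n
      have "(X ^^ n) ((X ^^ N0) h) = (X ^^ (n + N0)) h" by (simp add: funpow_add)
      then show "sm c ((X ^^ n) ((X ^^ N0) h)) \<in> ?G" using c(2)[of "n + N0"] Gamma_zero[OF modH] by simp
    qed
    have tG: "sm t ((X ^^ k) h) \<in> ?G" if t: "t \<in> b" for t k
    proof -
      have "t \<in> A k" using bA t Aall by blast
      then have "sm t ((X ^^ k) ((X ^^ N0) h)) \<in> ?G" using hN unfolding A_def by blast
      then have "sm (t ^ (p ^ N0 - 1)) (sm t ((X ^^ k) ((X ^^ N0) h))) \<in> ?G" by (rule Gamma_sm[OF modH])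
      moreover have "t ^ (p ^ N0 - 1) * t = t ^ (p ^ N0)" using p1
        by (metis One_nat_def Suc_diff_le diff_Suc_1 power_Suc2 one_le_power)
      moreover have "(X ^^ k) ((X ^^ N0) h) = (X ^^ N0) ((X ^^ k) h)"
        by (metis add.commute funpow_add o_apply)
      ultimately have "sm (t ^ (p ^ N0)) ((X ^^ N0) ((X ^^ k) h)) \<in> ?G" by (simp add: sm_sm[OF modH])
      then have "(X ^^ N0) (sm t ((X ^^ k) h)) \<in> ?G" by (simp add: Xp_sm[OF modH])
      then show ?thesis by (rule Gamma_pull[OF modH])
    qed
    show ?i1
    proof (intro allI impI ballI)
      fix n r assume n: "n \<ge> m0" and r: "r \<in> frob_power b ?q"
      obtain k where k: "n = m0 + k" using n le_Suc_ex by blast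
      have "{s ^ ?q | s. s \<in> b} \<subseteq> {r. sm r ((X ^^ n) h) = 0}"
      proof
        fix z assume "z \<in> {s ^ ?q | s. s \<in> b}"
        then obtain s where s: "s \<in> b" "z = s ^ ?q" by blast
        have "(X ^^ m0) (sm s ((X ^^ k) h)) = 0" using hslG tG[OF s(1)] by blast
        moreover have "(X ^^ m0) (sm s ((X ^^ k) h)) = sm z ((X ^^ n) h)"
          using s(2) k by (simp add: Xp_sm[OF modH] funpow_add)
        ultimately show "z \<in> {r. sm r ((X ^^ n) h) = 0}" by simp
      qed
      then have "frob_power b ?q \<subseteq> {r. sm r ((X ^^ n) h) = 0}"
        unfolding frob_power_def by (rule ideal_gen_least[OF ann_ideal[OF modH]])
      then show "sm r ((X ^^ n) h) = 0" using r by blast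
    qed
  qed
  show ?thesis using i12 i23 i34 i41 by blast
qed

end
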